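(* Let $f:[0,1]\times\mathbb{R}\rightarrow\mathbb{R}$ be continuous and assume there exists $\varphi\in\Phi$ such that: (K1) $0\leq f(t,b)-f(t,a)\leq9\sqrt{3}\,\varphi(b-a)$ for all $t\in[0,1]$ and all $a,b\in\mathbb{R}$ with $a\leq b$; (K2) there exists $x_{0}\in C([0,1])$ such that $x_{0}(t)\leq\int_{0}^{1}G(t,s)f(s,x_{0}(s))\,\mathrm{d}s$ for all $t\in[0,1]$. Then the boundary value problem \[ x'''(t)+f(t,x(t))=0,\ t\in(0,1),\qquad x(0)=x(1)=x''(0)=0 \] has a unique solution.
   Context: $C([0,1])$ denotes real continuous functions on $[0,1]$. $G(t,s)=\frac12(1-t)(t-s^2)$ for $0\leq s\leq t\leq1$ and $G(t,s)=\frac12 t(1-s)^2$ for $0\leq t\leq s\leq1$. $\Phi$ is the set of all nondecreasing functions $\varphi:[0,+\infty)\rightarrow[0,+\infty)$ such that for every $\varepsilon>0$ there exists $\delta(\varepsilon)>0$ with $\varepsilon\leq t<\varepsilon+\delta(\varepsilon)\Rightarrow\varphi(t)<\varepsilon$. *)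

theory Defs
  imports "HOL-Analysis.Analysis"
begin

definition G :: "real \<Rightarrow> real \<Rightarrow> real" where
  "G t s = (if s \<le> t then (1/2) * (1 - t) * (t - s^2) else (1/2) * t * (1 - s)^2)"

definition Phi :: "(real \<Rightarrow> real) set" where
  "Phi = {\<phi>. mono_on {0..} \<phi> \<and> (\<forall>t\<ge>0. \<phi> t \<ge> 0) \<and>
     (\<forall>\<epsilon>>0. \<exists>\<delta>>0. \<forall>t. \<epsilon> \<le> t \<and> t < \<epsilon> + \<delta> \<longrightarrow> \<phi> t < \<epsilon>)}"

definition is_bvp_solution :: "(real \<Rightarrow> real \<Rightarrow> real) \<Rightarrow> (real \<Rightarrow> real) \<Rightarrow> bool" where
  "is_bvp_solution f x \<longleftrightarrow>
     continuous_on {0..1} x \<and>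
     (\<exists>x1 x2 x3.
        (\<forall>t\<in>{0..1}. (x has_real_derivative x1 t) (at t within {0..1})) \<and>
        (\<forall>t\<in>{0..1}. (x1 has_real_derivative x2 t) (at t within {0..1})) \<and>
        (\<forall>t\<in>{0<..<1}. (x2 has_real_derivative x3 t) (at t)) \<and>
        (\<forall>t\<in>{0<..<1}. x3 t + f t (x t) = 0) \<and>
        x 0 = 0 \<and> x 1 = 0 \<and> x2 0 = 0)"

end

theory Submission
  imports Defs
begin


lemma Phi_props:
  assumes "\<phi> \<in> Phi"
  shows "\<And>t. t > 0 \<Longrightarrow> \<phi> t < t" "\<And>t. t \<ge> 0 \<Longrightarrow> \<phi> t \<le> t"
    "\<And>\<epsilon>. \<epsilon> > 0 \<Longrightarrow> \<exists>\<delta>>0. \<forall>t. \<epsilon> \<le> t \<and> t < \<epsilon> + \<delta> \<longrightarrow> \<phi> t < \<epsilon>"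
proof -
  have H: "mono_on {0..} \<phi> \<and> (\<forall>t\<ge>0. \<phi> t \<ge> 0) \<and>
     (\<forall>\<epsilon>>0. \<exists>\<delta>>0. \<forall>t. \<epsilon> \<le> t \<and> t < \<epsilon> + \<delta> \<longrightarrow> \<phi> t < \<epsilon>)"
    using assms unfolding Phi_def mem_Collect_eq .
  have mono: "mono_on {0..} \<phi>" using H by (rule conjunct1)
  have MK: "\<And>\<epsilon>. \<epsilon> > 0 \<Longrightarrow> \<exists>\<delta>>0. \<forall>t. \<epsilon> \<le> t \<and> t < \<epsilon> + \<delta> \<longrightarrow> \<phi> t < \<epsilon>"
    using H[THEN conjunct2, THEN conjunct2] by blast
  show lt: "\<phi> t < t" if tp: "t > 0" for t
  proof -
    obtain \<delta> where "\<delta> > 0" and H: "\<forall>s. t \<le> s \<and> s < t + \<delta> \<longrightarrow> \<phi> s < t" using MK[OF tp] by blast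
    have "t \<le> t \<and> t < t + \<delta>" using \<open>\<delta> > 0\<close> by simp
    thus ?thesis using H by blast
  qed
  show "\<phi> t \<le> t" if tn: "t \<ge> 0" for t
  proof (cases "t = 0")
    case True
    have "\<phi> 0 \<le> 0 + e" if ep: "e > 0" for e
    proof -
      have "\<phi> 0 \<le> \<phi> e" using ep by (intro mono_onD[OF mono]) simp_all
      with lt[OF ep] show ?thesis by simp
    qed
    hence "\<phi> 0 \<le> 0" by (rule field_le_epsilon)
    thus ?thesis using True by simp
  next
    case False 
    hence "t > 0" using tn by simp
    thus ?thesis using lt less_imp_le by blast
  qed
  show "\<And>\<epsilon>. \<epsilon> > 0 \<Longrightarrow> \<exists>\<delta>>0. \<forall>t. \<epsilon> \<le> t \<and> t < \<epsilon> + \<delta> \<longrightarrow> \<phi> t < \<epsilon>" by (rule MK)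
qed
lemma meir_keeler:
  fixes T :: "'a::complete_space \<Rightarrow> 'a"
  assumes phi: "\<phi> \<in> Phi"
    and contr: "\<And>x y. dist (T x) (T y) \<le> \<phi> (dist x y)"
  shows "\<exists>x. T x = x" "\<And>x y. T x = x \<Longrightarrow> T y = y \<Longrightarrow> x = y"
proof -
  note P = Phi_props[OF phi]
  have ne: "dist (T x) (T y) \<le> dist x y" for x y using contr[of x y] P(2)[of "dist x y"] by simp
  show "x = y" if "T x = x" "T y = y" for x y
  proof (rule ccontr)
    assume "x \<noteq> y"
    hence "\<phi> (dist x y) < dist x y" using P(1) by simp
    with contr[of x y] that show False by simp
  qed
  obtain x0 :: 'a where True by simp
  define x where "x n = (T ^^ n) x0" for n
  have xS: "x (Suc n) = T (x n)" for n by (simp add: x_def)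
  define d where "d n = dist (x n) (x (Suc n))" for n
  have dS: "d (Suc n) \<le> d n" for n unfolding d_def using ne[of "x n" "x (Suc n)"] by (simp add: xS)
  have d0: "d n \<ge> 0" for n by (simp add: d_def)
  have decd: "decseq d" using dS by (simp add: decseq_SucI)
  obtain L where L: "d \<longlonglongrightarrow> L" and Lle0: "\<forall>i. L \<le> d i"
    using decseq_convergent[OF decd, of 0] d0 by blast
  have Lle: "L \<le> d n" for n using Lle0 by simp
  have L0: "L = 0"
  proof (rule ccontr)
    assume "L \<noteq> 0"
    hence Lp: "L > 0" using LIMSEQ_le_const[OF L, of 0] d0 by fastforce
    obtain \<delta> where dp: "\<delta> > 0" and dd: "\<forall>t. L \<le> t \<and> t < L + \<delta> \<longrightarrow> \<phi> t < L" using P(3)[OF Lp] by blast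
    obtain N where "\<forall>n\<ge>N. dist (d n) L < \<delta>" using L dp unfolding LIMSEQ_def by blast
    hence "d N < L + \<delta>" by (auto simp: dist_real_def)
    hence "\<phi> (d N) < L" using dd Lle[of N] by blast
    moreover have "d (Suc N) \<le> \<phi> (d N)" unfolding d_def using contr[of "x N" "x (Suc N)"] by (simp add: xS)
    ultimately show False using Lle[of "Suc N"] by simp
  qed
  have Cauchy: "Cauchy x"
  proof (rule metric_CauchyI)
    fix e :: real assume ep: "e > 0"
    define \<epsilon> where "\<epsilon> = e / 4"
    have \<epsilon>p: "\<epsilon> > 0" using ep by (simp add: \<epsilon>_def)
    obtain \<delta>0 where dp0: "\<delta>0 > 0" and dd0: "\<forall>t. \<epsilon> \<le> t \<and> t < \<epsilon> + \<delta>0 \<longrightarrow> \<phi> t < \<epsilon>" using P(3)[OF \<epsilon>p] by blast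
    define \<delta> where "\<delta> = min \<delta>0 \<epsilon>"
    have dp: "\<delta> > 0" using dp0 \<epsilon>p by (simp add: \<delta>_def)
    have dd: "\<forall>t. \<epsilon> \<le> t \<and> t < \<epsilon> + \<delta> \<longrightarrow> \<phi> t < \<epsilon>" using dd0 by (auto simp: \<delta>_def)
    obtain N where N: "\<forall>n\<ge>N. dist (d n) 0 < \<delta>/2" using L dp unfolding L0 LIMSEQ_def by (meson half_gt_zero)
    have dN: "dist (x N) (x (Suc N)) < \<delta>/2" using N d_def by (auto simp: dist_real_def)
    have bnd: "dist (x N) (x (N + k)) \<le> \<epsilon> + \<delta>/2" for k
    proof (induction k)
      case 0 thus ?case using \<epsilon>p dp by simp
    next
      case (Suc k)
      let ?y = "x (N + k)"
      have "dist (x (Suc N)) (x (N + Suc k)) = dist (T (x N)) (T ?y)" by (simp add: xS)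
      also have "\<dots> \<le> \<epsilon>"
      proof (cases "dist (x N) ?y < \<epsilon>")
        case True thus ?thesis using ne[of "x N" ?y] by simp
      next
        case False
        hence "\<phi> (dist (x N) ?y) < \<epsilon>" using dd Suc dp by simp
        thus ?thesis using contr[of "x N" ?y] by simp
      qed
      finally have "dist (x (Suc N)) (x (N + Suc k)) \<le> \<epsilon>" .
      moreover have "dist (x N) (x (N + Suc k)) \<le> dist (x N) (x (Suc N)) + dist (x (Suc N)) (x (N + Suc k))"
        by (rule dist_triangle)
      ultimately show ?case using dN by simp
    qed
    have "dist (x m) (x n) < e" if "m \<ge> N" "n \<ge> N" for m n
    proof -
      have "dist (x N) (x m) \<le> \<epsilon> + \<delta>/2" using bnd[of "m - N"] that by simp
      moreover have "dist (x N) (x n) \<le> \<epsilon> + \<delta>/2" using bnd[of "n - N"] that by simp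
      moreover have "dist (x m) (x n) \<le> dist (x N) (x m) + dist (x N) (x n)" by (rule dist_triangle3)
      moreover have "\<delta> \<le> \<epsilon>" by (simp add: \<delta>_def)
      ultimately show ?thesis using ep by (simp add: \<epsilon>_def)
    qed
    thus "\<exists>N. \<forall>m\<ge>N. \<forall>n\<ge>N. dist (x m) (x n) < e" by blast
  qed
  then obtain z where z: "x \<longlonglongrightarrow> z" using complete_UNIV convergent_def by (meson Cauchy_convergent)
  have z1: "(\<lambda>n. x (Suc n)) \<longlonglongrightarrow> z" using z by (rule LIMSEQ_Suc)
  have "(\<lambda>n. T (x n)) \<longlonglongrightarrow> T z"
  proof -
    have "(\<lambda>n. dist (x n) z) \<longlonglongrightarrow> 0" using z tendsto_dist_iff by blast
    hence "(\<lambda>n. dist (T (x n)) (T z)) \<longlonglongrightarrow> 0"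
      by (rule Lim_null_comparison[rotated]) (use ne in auto)
    thus ?thesis using tendsto_dist_iff by blast
  qed
  with z1 have "T z = z" unfolding xS using LIMSEQ_unique by blast
  thus "\<exists>x. T x = x" by blast
qed



definition I0 :: "(real \<Rightarrow> real) \<Rightarrow> real \<Rightarrow> real" where "I0 u t = integral {0..t} u"
definition I2 :: "(real \<Rightarrow> real) \<Rightarrow> real \<Rightarrow> real" where "I2 u t = integral {0..t} (\<lambda>s. s^2 * u s)"
definition VV :: "(real \<Rightarrow> real) \<Rightarrow> real \<Rightarrow> real" where "VV u t = integral {t..1} (\<lambda>s. (1-s)^2 * u s)"
definition Y :: "(real \<Rightarrow> real) \<Rightarrow> real \<Rightarrow> real" where
  "Y u t = (1/2)*(1-t)*(t * I0 u t - I2 u t) + (1/2)*t*VV u t"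
definition Y1 :: "(real \<Rightarrow> real) \<Rightarrow> real \<Rightarrow> real" where
  "Y1 u t = (1/2)*(I2 u t + (1 - 2*t) * I0 u t) + (1/2)*VV u t"
definition Y2 :: "(real \<Rightarrow> real) \<Rightarrow> real \<Rightarrow> real" where
  "Y2 u t = - I0 u t"

lemma G_nonneg: "t \<in> {0..1} \<Longrightarrow> s \<in> {0..1} \<Longrightarrow> G t s \<ge> 0"
proof -
  assume t: "t \<in> {0..1}" and s: "s \<in> {0..1}"
  show ?thesis
  proof (cases "s \<le> t")
    case True
    have "s^2 \<le> s" using s by (simp add: power2_eq_square mult_left_le_one_le)
    hence "t - s^2 \<ge> 0" using True by simp
    thus ?thesis using True t by (simp add: G_def)
  next
    case False thus ?thesis using t by (simp add: G_def)
  qed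
qed

lemma integral_G:
  assumes u: "continuous_on {0..1} u" and t: "t \<in> {0..1}"
  shows "(\<lambda>s. G t s * u s) integrable_on {0..1}"
    and "integral {0..1} (\<lambda>s. G t s * u s) = Y u t"
proof -
  have c0: "continuous_on {0..t} u" by (rule continuous_on_subset[OF u]) (use t in auto)
  have c1: "continuous_on {t..1} u" by (rule continuous_on_subset[OF u]) (use t in auto)
  have e0: "G t s * u s = (1/2)*(1-t)*(t * u s - s^2 * u s)" if "s \<in> {0..t}" for s
  proof -
    have g: "G t s = (1/2)*(1-t)*(t-s^2)" using that by (simp add: G_def)
    show ?thesis unfolding g by (simp add: mult.assoc left_diff_distrib)
  qed
  have e1: "G t s * u s = (1/2)*t*((1-s)^2 * u s)" if "s \<in> {t..1}" for s
  proof (cases "s = t")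
    case True
    have h: "(1-t)*(t-t^2) = t*(1-t)^2" by (simp add: power2_eq_square algebra_simps)
    have g: "G t t = (1/2)*t*(1-t)^2" unfolding G_def using h by (simp add: mult.assoc)
    show ?thesis unfolding True g by (simp add: mult.assoc)
  next
    case False thus ?thesis using that by (simp add: G_def)
  qed
  have i0: "(\<lambda>s. (1/2)*(1-t)*(t * u s - s^2 * u s)) integrable_on {0..t}"
    by (rule integrable_continuous_interval) (intro continuous_intros c0)
  have i1: "(\<lambda>s. (1/2)*t*((1-s)^2 * u s)) integrable_on {t..1}"
    by (rule integrable_continuous_interval) (intro continuous_intros c1)
  have j0: "(\<lambda>s. G t s * u s) integrable_on {0..t}" by (rule integrable_eq[OF i0]) (simp add: e0)
  have j1: "(\<lambda>s. G t s * u s) integrable_on {t..1}" by (rule integrable_eq[OF i1]) (simp add: e1)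
  show int: "(\<lambda>s. G t s * u s) integrable_on {0..1}"
    using Henstock_Kurzweil_Integration.integrable_combine[OF _ _ j0 j1] t by simp
  have ua: "u integrable_on {0..t}" by (rule integrable_continuous_interval[OF c0])
  have ub: "(\<lambda>s. s^2 * u s) integrable_on {0..t}" by (rule integrable_continuous_interval) (intro continuous_intros c0)
  have uc: "(\<lambda>s. (1-s)^2 * u s) integrable_on {t..1}" by (rule integrable_continuous_interval) (intro continuous_intros c1)
  have "integral {0..t} (\<lambda>s. G t s * u s) = integral {0..t} (\<lambda>s. (1/2)*(1-t)*(t * u s - s^2 * u s))"
    using e0 by (rule integral_cong)
  also have "\<dots> = (1/2)*(1-t)*(t * I0 u t - I2 u t)"
  proof -
    have ua': "(\<lambda>s. t * u s) integrable_on {0..t}" by (rule integrable_continuous_interval) (intro continuous_intros c0)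
    have "integral {0..t} (\<lambda>s. t * u s - s^2 * u s) = integral {0..t} (\<lambda>s. t * u s) - integral {0..t} (\<lambda>s. s^2 * u s)"
      by (rule integral_diff[OF ua' ub])
    thus ?thesis by (simp add: I0_def I2_def)
  qed
  finally have a0: "integral {0..t} (\<lambda>s. G t s * u s) = (1/2)*(1-t)*(t * I0 u t - I2 u t)" .
  have "integral {t..1} (\<lambda>s. G t s * u s) = integral {t..1} (\<lambda>s. (1/2)*t*((1-s)^2 * u s))"
    using e1 by (rule integral_cong)
  also have "\<dots> = (1/2)*t*VV u t" by (simp add: VV_def)
  finally have a1: "integral {t..1} (\<lambda>s. G t s * u s) = (1/2)*t*VV u t" .
  show "integral {0..1} (\<lambda>s. G t s * u s) = Y u t"
    using Henstock_Kurzweil_Integration.integral_combine[OF _ _ int, of t] t a0 a1 by (simp add: Y_def)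
qed



lemma Y_derivs:
  assumes u: "continuous_on {0..1} u" and t: "t \<in> {0..1}"
  shows "(Y u has_real_derivative Y1 u t) (at t within {0..1})"
    and "(Y1 u has_real_derivative Y2 u t) (at t within {0..1})"
    and "(Y2 u has_real_derivative - u t) (at t within {0..1})"
proof -
  have c2: "continuous_on {0..1} (\<lambda>s. s^2 * u s)" by (intro continuous_intros u)
  have c3: "continuous_on {0..1} (\<lambda>s. (1-s)^2 * u s)" by (intro continuous_intros u)
  have d0: "(I0 u has_real_derivative u t) (at t within {0..1})"
    unfolding I0_def[abs_def] by (rule integral_has_real_derivative[OF u t])
  have d2: "(I2 u has_real_derivative t^2 * u t) (at t within {0..1})"
    unfolding I2_def[abs_def] by (rule integral_has_real_derivative[OF c2 t])
  have dV: "(VV u has_real_derivative - ((1-t)^2 * u t)) (at t within {0..1})"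
    unfolding VV_def[abs_def] by (rule integral_has_real_derivative'[OF c3 t])
  show "(Y u has_real_derivative Y1 u t) (at t within {0..1})"
    unfolding Y_def[abs_def]
    apply (rule derivative_eq_intros d0 d2 dV refl)+
    apply (simp add: Y1_def power2_eq_square field_simps)
    done
  show "(Y1 u has_real_derivative Y2 u t) (at t within {0..1})"
    unfolding Y1_def[abs_def]
    apply (rule derivative_eq_intros d0 d2 dV refl)+
    apply (simp add: Y2_def power2_eq_square field_simps)
    done
  show "(Y2 u has_real_derivative - u t) (at t within {0..1})"
    unfolding Y2_def[abs_def]
    apply (rule derivative_eq_intros d0 refl)+
    done
qed



lemma Y_vals: "Y u 0 = 0" "Y u 1 = 0" "Y2 u 0 = 0"
  by (simp_all add: Y_def Y2_def I0_def I2_def VV_def)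

lemma Y_cont: "continuous_on {0..1} u \<Longrightarrow> continuous_on {0..1} (Y u)"
  by (rule DERIV_continuous_on[OF Y_derivs(1)])

lemma cont_comp:
  assumes cont: "continuous_on ({0..1} \<times> UNIV) (\<lambda>(t, x). f t x)" and z: "continuous_on {0..1} z"
  shows "continuous_on {0..1} (\<lambda>s. f s (z s))"
proof -
  have "continuous_on {0..1} (\<lambda>s. (\<lambda>(t, x). f t x) (s, z s))"
    by (rule continuous_on_compose2[OF cont]) (auto intro!: continuous_intros z)
  thus ?thesis by simp
qed

lemma zero_deriv_within:
  fixes g :: "real \<Rightarrow> real"
  assumes "continuous_on {0..1} g"
    and "\<And>t. t \<in> {0<..<1} \<Longrightarrow> (g has_real_derivative 0) (at t within {0..1})"
    and "t \<in> {0..1}"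
  shows "g t = g 0"
proof -
  have A: "(*) 0 = (\<lambda>_. 0 :: real)" by (intro ext) simp
  show ?thesis
  proof (rule has_derivative_zero_unique_strong_interval[of "{0,1}" 0 1 g "g 0" t])
    fix x :: real assume "x \<in> {0..1} - {0,1}"
    hence "x \<in> {0<..<1}" by auto
    from assms(2)[OF this] show "(g has_derivative (\<lambda>h. 0)) (at x within {0..1})"
      by (simp add: has_field_derivative_def A)
  qed (use assms in auto)
qed

lemma bvp_imp_Y:
  assumes cont: "continuous_on ({0..1} \<times> UNIV) (\<lambda>(t, x). f t x)"
    and sol: "is_bvp_solution f z"
  shows "\<forall>t\<in>{0..1}. z t = Y (\<lambda>s. f s (z s)) t"
proof -
  define u where "u = (\<lambda>s. f s (z s))"
  have zc: "continuous_on {0..1} z" using sol unfolding is_bvp_solution_def by blast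
  obtain x1 x2 x3 where
    h1: "\<forall>t\<in>{0..1}. (z has_real_derivative x1 t) (at t within {0..1})" and
    h2: "\<forall>t\<in>{0..1}. (x1 has_real_derivative x2 t) (at t within {0..1})" and
    h3: "\<forall>t\<in>{0<..<1}. (x2 has_real_derivative x3 t) (at t)" and
    h4: "\<forall>t\<in>{0<..<1}. x3 t + f t (z t) = 0" and
    h5: "z 0 = 0" and h6: "z 1 = 0" and h7: "x2 0 = 0"
    using sol unfolding is_bvp_solution_def by blast
  have uc: "continuous_on {0..1} u" unfolding u_def by (rule cont_comp[OF cont zc])
  note D = Y_derivs[OF uc]
  define w2 where "w2 t = x2 t - Y2 u t" for t
  have dw2: "(w2 has_real_derivative 0) (at t)" if t: "t \<in> {0<..<1}" for t
  proof -
    have tt: "t \<in> {0..1}" using t by auto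
    have "(Y2 u has_real_derivative - u t) (at t)"
      using D(3)[OF tt] at_within_Icc_at[of 0 t 1] t by simp
    hence "(w2 has_real_derivative x3 t - - u t) (at t)"
      unfolding w2_def[abs_def] using h3 t by (intro DERIV_diff) auto
    thus ?thesis using h4 t by (simp add: u_def)
  qed
  define c where "c = w2 (1/2)"
  have w2c: "w2 t = c" if t: "t \<in> {0<..<1}" for t
  proof -
    have A: "(*) 0 = (\<lambda>_. 0 :: real)" by (intro ext) simp
    have dd: "(w2 has_derivative (\<lambda>h. 0)) (at x)" if "x \<in> {0<..<1::real}" for x
      using dw2[OF that] by (simp add: has_field_derivative_def A)
    show ?thesis unfolding c_def
      by (rule has_derivative_zero_unique_connected[of "{0<..<1}" w2 t "1/2"]) (use t dd in auto)
  qed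
  define g where "g t = (x1 t - Y1 u t) - c * t" for t
  have dg: "(g has_real_derivative w2 t - c) (at t within {0..1})" if t: "t \<in> {0..1}" for t
    unfolding g_def[abs_def] w2_def
    by (rule derivative_eq_intros refl h2[rule_format, OF t] D(2)[OF t])+ simp
  have gc: "continuous_on {0..1} g" using dg by (rule DERIV_continuous_on)
  have gconst: "g t = g 0" if "t \<in> {0..1}" for t
  proof (rule zero_deriv_within[OF gc _ that])
    fix t :: real assume t: "t \<in> {0<..<1}"
    hence "t \<in> {0..1}" by auto
    from dg[OF this] show "(g has_real_derivative 0) (at t within {0..1})" using w2c[OF t] by simp
  qed
  have c0: "c = 0"
  proof -
    have "(g has_real_derivative w2 0 - c) (at 0 within {0..1})" using dg by simp
    hence d1: "(g has_real_derivative - c) (at 0 within {0..1})" using h7 Y_vals(3) by (simp add: w2_def)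
    have "((\<lambda>t. g 0) has_real_derivative 0) (at 0 within {0..1})" by simp
    hence d2: "(g has_real_derivative 0) (at 0 within {0..1})"
      by (rule has_field_derivative_transform_within[where d=1]) (auto intro!: gconst[symmetric])
    have nb: "at (0::real) within {0..1} \<noteq> bot" using at_within_Icc_at_right[of "0::real" 1] by simp
    from has_field_derivative_unique[OF d1 d2 nb] show ?thesis by simp
  qed
  define d where "d = g 0"
  have w1: "x1 t - Y1 u t = d" if "t \<in> {0..1}" for t using gconst[OF that] by (simp add: g_def c0 d_def)
  define h where "h t = (z t - Y u t) - d * t" for t
  have dh: "(h has_real_derivative 0) (at t within {0..1})" if t: "t \<in> {0..1}" for t
  proof -
    have "(h has_real_derivative (x1 t - Y1 u t) - d) (at t within {0..1})"
      unfolding h_def[abs_def]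
      by (rule derivative_eq_intros refl h1[rule_format, OF t] D(1)[OF t])+ simp
    thus ?thesis using w1[OF t] by simp
  qed
  have hc: "continuous_on {0..1} h" using dh by (rule DERIV_continuous_on)
  have hconst: "h t = h 0" if "t \<in> {0..1}" for t
    by (rule zero_deriv_within[OF hc _ that]) (use dh in auto)
  have h0: "h 0 = 0" using h5 Y_vals(1) by (simp add: h_def)
  have "h 1 = 0" using hconst[of 1] h0 by simp
  hence d0: "d = 0" using h6 Y_vals(2) by (simp add: h_def)
  show ?thesis
  proof
    fix t :: real assume t: "t \<in> {0..1}"
    have "h t = 0" using hconst[OF t] h0 by simp
    thus "z t = Y (\<lambda>s. f s (z s)) t" using d0 by (simp add: h_def u_def)
  qed
qed



definition cl :: "real \<Rightarrow> real" where "cl t = max 0 (min 1 t)"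

lemma cl_in: "cl t \<in> {0..1}" by (simp add: cl_def)
lemma cl_id: "t \<in> {0..1} \<Longrightarrow> cl t = t" by (simp add: cl_def)
lemma cl_cont: "continuous_on UNIV cl" unfolding cl_def by (intro continuous_intros)

lemma ext_mem:
  assumes "continuous_on {0..1} g"
  shows "(\<lambda>t. g (cl t)) \<in> bcontfun"
proof -
  have c: "continuous_on UNIV (\<lambda>t. g (cl t))"
    by (rule continuous_on_compose2[OF assms cl_cont]) (use cl_in in blast)
  have "compact (g ` {0..1})" by (rule compact_continuous_image[OF assms]) simp
  hence b: "bounded (g ` {0..1})" by (rule compact_imp_bounded)
  have "range (\<lambda>t. g (cl t)) \<subseteq> g ` {0..1}" using cl_in by auto
  hence "bounded (range (\<lambda>t. g (cl t)))" using b bounded_subset by blast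
  thus ?thesis using c by (simp add: bcontfun_def)
qed

lemma Y_cong:
  assumes "\<And>r. r \<in> {0..1} \<Longrightarrow> u r = v r" and t: "t \<in> {0..1}"
  shows "Y u t = Y v t"
proof -
  have a: "I0 u t = I0 v t" unfolding I0_def by (rule integral_cong) (use assms in auto)
  have b: "I2 u t = I2 v t" unfolding I2_def by (rule integral_cong) (use assms in auto)
  have c: "VV u t = VV v t" unfolding VV_def by (rule integral_cong) (use assms in auto)
  show ?thesis by (simp add: Y_def a b c)
qed

lemma ftc_real:
  fixes F f :: "real \<Rightarrow> real"
  assumes "a \<le> b" "\<And>x. x \<in> {a..b} \<Longrightarrow> (F has_real_derivative f x) (at x within {a..b})"
  shows "integral {a..b} f = F b - F a"
  using fundamental_theorem_of_calculus[of a b F f] assms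
  by (simp add: has_real_derivative_iff_has_vector_derivative integral_unique)

lemma Y_const:
  assumes s: "s \<in> {0..1}"
  shows "Y (\<lambda>_. K) s = K * (s - s^3) / 6"
proof -
  have a: "I0 (\<lambda>_. K) s = K * s" unfolding I0_def
    using ftc_real[of 0 s "\<lambda>x. K * x" "\<lambda>_. K"] s
    by (auto intro!: derivative_eq_intros)
  have "integral {0..s} (\<lambda>x. x^2 * K) = K * s^3 / 3 - K * 0^3 / 3"
    by (rule ftc_real) (use s in \<open>auto intro!: derivative_eq_intros simp: power2_eq_square\<close>)
  hence b: "I2 (\<lambda>_. K) s = K * s^3 / 3" unfolding I2_def by simp
  have "integral {s..1} (\<lambda>x. (1 - x)^2 * K) = (- K * (1 - 1)^3 / 3) - (- K * (1 - s)^3 / 3)"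
    by (rule ftc_real) (use s in \<open>auto intro!: derivative_eq_intros simp: power2_eq_square field_simps\<close>)
  hence c: "VV (\<lambda>_. K) s = K * (1 - s)^3 / 3" unfolding VV_def by simp
  show ?thesis unfolding Y_def a b c by (simp add: power2_eq_square power3_eq_cube field_simps)
qed

lemma cubic_bound:
  assumes s: "s \<in> {0..1}"
  shows "9 * sqrt 3 * (s - s^3) \<le> 6"
proof -
  define a where "a = sqrt 3"
  have a2: "a^2 = 3" by (simp add: a_def)
  have a0: "a \<ge> 0" by (simp add: a_def)
  have e: "6 - 9 * a * (s - s^3) = 3 * (a * s - 1)^2 * (a * s + 2)" 
  proof -
    have r: "3 * (a * s - 1)^2 * (a * s + 2) = 3 * a^3 * s^3 - 9 * a * s + 6" by algebra
    have a3: "a^3 = 3 * a" using a2 by (simp add: power3_eq_cube power2_eq_square)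
    show ?thesis unfolding r a3 by (simp add: algebra_simps)
  qed
  have "3 * (a * s - 1)^2 * (a * s + 2) \<ge> 0" using a0 s by simp
  hence "9 * a * (s - s^3) \<le> 6" using e by linarith
  thus ?thesis by (simp add: a_def)
qed



theorem corollary8:
  fixes f :: "real \<Rightarrow> real \<Rightarrow> real" and \<phi> :: "real \<Rightarrow> real"
  assumes cont: "continuous_on ({0..1} \<times> UNIV) (\<lambda>(t, x). f t x)"
    and phi: "\<phi> \<in> Phi"
    and K1: "\<And>t a b. t \<in> {0..1} \<Longrightarrow> a \<le> b \<Longrightarrow>
               0 \<le> f t b - f t a \<and> f t b - f t a \<le> 9 * sqrt 3 * \<phi> (b - a)"
    and K2: "\<exists>x0. continuous_on {0..1} x0 \<and>
               (\<forall>t\<in>{0..1}. x0 t \<le> integral {0..1} (\<lambda>s. G t s * f s (x0 s)))"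
  shows "\<exists>x. is_bvp_solution f x \<and>
           (\<forall>y. is_bvp_solution f y \<longrightarrow> (\<forall>t\<in>{0..1}. y t = x t))"
proof -
  have H: "mono_on {0..} \<phi> \<and> (\<forall>t\<ge>0. \<phi> t \<ge> 0) \<and>
     (\<forall>\<epsilon>>0. \<exists>\<delta>>0. \<forall>t. \<epsilon> \<le> t \<and> t < \<epsilon> + \<delta> \<longrightarrow> \<phi> t < \<epsilon>)"
    using phi unfolding Phi_def mem_Collect_eq .
  have mono: "mono_on {0..} \<phi>" using H by (rule conjunct1)
  have phinn: "\<forall>t\<ge>0. \<phi> t \<ge> 0" using H[THEN conjunct2] by (rule conjunct1)
  have ucont: "continuous_on {0..1} (\<lambda>s. f s (apply_bcontfun F s))" for F :: "real \<Rightarrow>\<^sub>C real"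
    by (rule cont_comp[OF cont]) simp
  define T where "T F = Bcontfun (\<lambda>t. Y (\<lambda>s. f s (apply_bcontfun F s)) (cl t))" for F :: "real \<Rightarrow>\<^sub>C real"
  have Tap: "apply_bcontfun (T F) t = Y (\<lambda>s. f s (apply_bcontfun F s)) (cl t)" for F t
    unfolding T_def by (subst Bcontfun_inverse) (rule ext_mem[OF Y_cont[OF ucont]], simp)
  have contr: "dist (T F) (T H) \<le> \<phi> (dist F H)" for F H
  proof (rule dist_bound)
    fix t :: real
    define s where "s = cl t"
    have s: "s \<in> {0..1}" unfolding s_def by (rule cl_in)
    define uF where "uF = (\<lambda>s. f s (apply_bcontfun F s))"
    define uH where "uH = (\<lambda>s. f s (apply_bcontfun H s))"
    have cF: "continuous_on {0..1} uF" unfolding uF_def by (rule ucont)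
    have cH: "continuous_on {0..1} uH" unfolding uH_def by (rule ucont)
    define D where "D = dist F H"
    have D0: "D \<ge> 0" by (simp add: D_def)
    define K where "K = 9 * sqrt 3 * \<phi> D"
    have Kb: "\<bar>uF r - uH r\<bar> \<le> K" if r: "r \<in> {0..1}" for r
    proof -
      have dr: "\<bar>apply_bcontfun F r - apply_bcontfun H r\<bar> \<le> D"
        using dist_bounded[of F r H] by (simp add: D_def dist_real_def)
      have pm: "\<phi> \<bar>apply_bcontfun F r - apply_bcontfun H r\<bar> \<le> \<phi> D"
        by (rule mono_onD[OF mono]) (use dr in auto)
      show ?thesis
      proof (cases "apply_bcontfun F r \<le> apply_bcontfun H r")
        case True
        have "9 * sqrt 3 * \<phi> (apply_bcontfun H r - apply_bcontfun F r) \<le> K"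
          using pm True by (simp add: K_def abs_minus_commute)
        with K1[OF r True] show ?thesis by (simp add: uF_def uH_def)
      next
        case False
        hence le: "apply_bcontfun H r \<le> apply_bcontfun F r" by simp
        have "9 * sqrt 3 * \<phi> (apply_bcontfun F r - apply_bcontfun H r) \<le> K"
          using pm le by (simp add: K_def)
        with K1[OF r le] show ?thesis by (simp add: uF_def uH_def)
      qed
    qed
    have cD: "continuous_on {0..1} (\<lambda>r. uF r - uH r)" by (intro continuous_intros cF cH)
    have cK: "continuous_on {0..1} (\<lambda>r::real. K)" by (intro continuous_intros)
    have "Y uF s - Y uH s = integral {0..1} (\<lambda>r. G s r * uF r) - integral {0..1} (\<lambda>r. G s r * uH r)"
      using integral_G(2)[OF cF s] integral_G(2)[OF cH s] by simp
    also have "\<dots> = integral {0..1} (\<lambda>r. G s r * uF r - G s r * uH r)"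
      by (rule integral_diff[symmetric]) (rule integral_G(1)[OF cF s], rule integral_G(1)[OF cH s])
    also have "\<dots> = integral {0..1} (\<lambda>r. G s r * (uF r - uH r))" by (simp add: right_diff_distrib)
    finally have eq: "Y uF s - Y uH s = integral {0..1} (\<lambda>r. G s r * (uF r - uH r))" .
    have "norm (integral {0..1} (\<lambda>r. G s r * (uF r - uH r))) \<le> integral {0..1} (\<lambda>r. G s r * K)"
    proof (rule Henstock_Kurzweil_Integration.integral_norm_bound_integral)
      show "(\<lambda>r. G s r * (uF r - uH r)) integrable_on {0..1}" by (rule integral_G(1)[OF cD s])
      show "(\<lambda>r. G s r * K) integrable_on {0..1}" by (rule integral_G(1)[OF cK s])
      fix r :: real assume r: "r \<in> {0..1}"
      have g0: "G s r \<ge> 0" by (rule G_nonneg[OF s r])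
      show "norm (G s r * (uF r - uH r)) \<le> G s r * K"
        using g0 Kb[OF r] by (simp add: abs_mult mult_left_mono)
    qed
    also have "integral {0..1} (\<lambda>r. G s r * K) = K * (s - s^3) / 6"
      using integral_G(2)[OF cK s] Y_const[OF s] by simp
    also have "\<dots> \<le> \<phi> D"
    proof -
      have p0: "\<phi> D \<ge> 0" using phinn D0 by simp
      have "(9 * sqrt 3 * (s - s^3)) * \<phi> D \<le> 6 * \<phi> D"
        by (rule mult_right_mono[OF cubic_bound[OF s] p0])
      thus ?thesis by (simp add: K_def)
    qed
    finally have "\<bar>Y uF s - Y uH s\<bar> \<le> \<phi> D" using eq by simp
    thus "dist (apply_bcontfun (T F) t) (apply_bcontfun (T H) t) \<le> \<phi> (dist F H)"
      by (simp add: Tap dist_real_def uF_def uH_def s_def D_def)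
  qed
  obtain XF where XF: "T XF = XF" using meir_keeler(1)[OF phi contr] by blast
  have uniqT: "\<And>A B. T A = A \<Longrightarrow> T B = B \<Longrightarrow> A = B" using meir_keeler(2)[OF phi contr] by blast
  define u where "u = (\<lambda>s. f s (apply_bcontfun XF s))"
  have uc: "continuous_on {0..1} u" unfolding u_def by (rule ucont)
  define y where "y = Y u"
  have XFval: "apply_bcontfun XF t = y t" if "t \<in> {0..1}" for t
  proof -
    have "apply_bcontfun XF t = apply_bcontfun (T XF) t" using XF by simp
    also have "\<dots> = y t" using that by (simp add: Tap cl_id y_def u_def)
    finally show ?thesis .
  qed
  have ysol: "is_bvp_solution f y"
    unfolding is_bvp_solution_def
  proof (intro conjI exI)
    show "continuous_on {0..1} y" unfolding y_def by (rule Y_cont[OF uc])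
    show "\<forall>t\<in>{0..1}. (y has_real_derivative Y1 u t) (at t within {0..1})"
      unfolding y_def using Y_derivs(1)[OF uc] by blast
    show "\<forall>t\<in>{0..1}. (Y1 u has_real_derivative Y2 u t) (at t within {0..1})"
      using Y_derivs(2)[OF uc] by blast
    show "\<forall>t\<in>{0<..<1}. (Y2 u has_real_derivative - u t) (at t)"
    proof
      fix t :: real assume t: "t \<in> {0<..<1}"
      hence "t \<in> {0..1}" by auto
      from Y_derivs(3)[OF uc this] show "(Y2 u has_real_derivative - u t) (at t)"
        using at_within_Icc_at[of 0 t 1] t by simp
    qed
    show "\<forall>t\<in>{0<..<1}. - u t + f t (y t) = 0"
    proof
      fix t :: real assume t: "t \<in> {0<..<1}"
      hence "t \<in> {0..1}" by auto
      thus "- u t + f t (y t) = 0" using XFval by (simp add: u_def)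
    qed
    show "y 0 = 0" "y 1 = 0" "Y2 u 0 = 0" using Y_vals by (simp_all add: y_def)
  qed
  have yuniq: "\<forall>t\<in>{0..1}. z t = y t" if zsol: "is_bvp_solution f z" for z
  proof -
    have zc: "continuous_on {0..1} z" using zsol unfolding is_bvp_solution_def by blast
    define zb where "zb = Bcontfun (\<lambda>t. z (cl t))"
    have zap: "apply_bcontfun zb t = z (cl t)" for t
      unfolding zb_def by (subst Bcontfun_inverse) (rule ext_mem[OF zc], simp)
    have zY: "\<forall>t\<in>{0..1}. z t = Y (\<lambda>s. f s (z s)) t" by (rule bvp_imp_Y[OF cont zsol])
    have "T zb = zb"
    proof (rule bcontfun_eqI)
      fix t
      have "apply_bcontfun (T zb) t = Y (\<lambda>s. f s (apply_bcontfun zb s)) (cl t)" by (rule Tap)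
      also have "\<dots> = Y (\<lambda>s. f s (z s)) (cl t)"
        by (rule Y_cong) (simp add: zap cl_id, rule cl_in)
      also have "\<dots> = z (cl t)" using zY cl_in[of t] by metis
      finally show "apply_bcontfun (T zb) t = apply_bcontfun zb t" by (simp add: zap)
    qed
    hence "zb = XF" using uniqT XF by blast
    show ?thesis
    proof
      fix t :: real assume t: "t \<in> {0..1}"
      have "z t = apply_bcontfun zb t" using cl_id[OF t] by (simp add: zap)
      also have "\<dots> = y t" using \<open>zb = XF\<close> XFval[OF t] by simp
      finally show "z t = y t" .
    qed
  qed
  show ?thesis using ysol yuniq by blast
qed

end
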